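(* Let $T$ be a tree on $n\ge2$ vertices, $k\ge2$ even, and $M$ the order-$k$ Steiner distance hypermatrix of $T$. For all $\mathbf{c}_1,\ldots,\mathbf{c}_k\in\mathcal{H}_n$, $$M(\mathbf{c}_1,\ldots,\mathbf{c}_k)=(-2\,\mathbb{I}^k_{n-1})(P_T\mathbf{c}_1,\ldots,P_T\mathbf{c}_k)=-2\sum_{e\in E(T)}\prod_{j=1}^k (\mathbf{a}'^T_e\mathbf{c}_j).$$
   Context: $T$ is a tree with vertex set $\{1,\dots,n\}$ and edge set $E(T)$. For $U\subseteq V(T)$, the Steiner distance $S(U)$ is the minimum number of edges of a connected subgraph of $T$ whose vertex set contains $U$. The order-$k$ Steiner distance hypermatrix $M$ has entries $M_{(i_1,\dots,i_k)}=S(\{i_1,\dots,i_k\})$, and for any order-$k$ hypermatrix $H$ of dimension $m$, $H(\mathbf{x}_1,\dots,\mathbf{x}_k)=\sum_{\mathbf{i}\in [m]^k}H_{\mathbf{i}}\prod_{j=1}^k x_{j i_j}$. For an edge $e$, $A(e)$, $B(e)$ are the vertex sets of the two components of $T-e$, $\mathbf{a}_e$ is the indicator vector of $A(e)$, $\mathbb{J}$ is the all-ones vector, $\mathbf{a}'_e=\mathbf{a}_e-\frac{|A(e)|}{n}\mathbb{J}$, and $P_T$ is the $(n-1)\times n$ matrix with rows indexed by $E(T)$ whose row $e$ is $\mathbf{a}'^T_e$. $\mathcal{H}_n=\{\mathbf{c}\in\mathbb{R}^n:\mathbf{c}^T\mathbb{J}=0\}$. $\mathbb{I}^k_{m}$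 is the order-$k$, dimension-$m$ identity hypermatrix: its $(i_1,\dots,i_k)$ entry is $1$ if $i_1=\dots=i_k$ and $0$ otherwise. *)

theory Defs
  imports Complex_Main "HOL-Library.FuncSet"
begin

definition adj_rel :: "nat set set \<Rightarrow> (nat \<times> nat) set" where
  "adj_rel F = {(x, y). {x, y} \<in> F}"

definition graph_connected :: "nat set \<Rightarrow> nat set set \<Rightarrow> bool" where
  "graph_connected W F \<longleftrightarrow> (\<forall>x\<in>W. \<forall>y\<in>W. (x, y) \<in> (adj_rel F)\<^sup>*)"

definition simple_graph :: "nat set \<Rightarrow> nat set set \<Rightarrow> bool" where
  "simple_graph V E \<longleftrightarrow> (\<forall>e\<in>E. e \<subseteq> V \<and> card e = 2)"

text \<open>A tree: connected and acyclic, acyclicity expressed as: removing any edge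
  disconnects its endpoints (no edge lies on a cycle).\<close>
definition is_tree :: "nat set \<Rightarrow> nat set set \<Rightarrow> bool" where
  "is_tree V E \<longleftrightarrow> finite V \<and> simple_graph V E \<and> graph_connected V E \<and>
     (\<forall>e\<in>E. \<forall>x y. e = {x, y} \<longrightarrow> (x, y) \<notin> (adj_rel (E - {e}))\<^sup>*)"

definition steiner_dist :: "nat set \<Rightarrow> nat set set \<Rightarrow> nat set \<Rightarrow> nat" where
  "steiner_dist V E U = (LEAST m. \<exists>W F. U \<subseteq> W \<and> W \<subseteq> V \<and> F \<subseteq> E \<and>
       (\<forall>f\<in>F. f \<subseteq> W) \<and> graph_connected W F \<and> card F = m)"

text \<open>A(e): vertex set of the component of T - e containing the smaller endpoint of e.
  (The choice of side only changes a'_e by a sign.)\<close>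
definition side_A :: "nat set \<Rightarrow> nat set set \<Rightarrow> nat set \<Rightarrow> nat set" where
  "side_A V E e = {v \<in> V. (Min e, v) \<in> (adj_rel (E - {e}))\<^sup>*}"

definition a_prime :: "nat \<Rightarrow> nat set set \<Rightarrow> nat set \<Rightarrow> nat \<Rightarrow> real" where
  "a_prime n E e v = (if v \<in> side_A {1..n} E e then 1 else 0)
                      - real (card (side_A {1..n} E e)) / real n"

definition P_T :: "nat \<Rightarrow> nat set set \<Rightarrow> (nat \<Rightarrow> real) \<Rightarrow> nat set \<Rightarrow> real" where
  "P_T n E c e = (\<Sum>v\<in>{1..n}. a_prime n E e v * c v)"

definition hm_form :: "'a set \<Rightarrow> nat \<Rightarrow> ((nat \<Rightarrow> 'a) \<Rightarrow> real) \<Rightarrow> (nat \<Rightarrow> 'a \<Rightarrow> real) \<Rightarrow> real" where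
  "hm_form I k H x = (\<Sum>i\<in>Pi\<^sub>E {..<k} (\<lambda>_. I). H i * (\<Prod>j<k. x j (i j)))"

definition steiner_hm :: "nat \<Rightarrow> nat set set \<Rightarrow> nat \<Rightarrow> (nat \<Rightarrow> nat) \<Rightarrow> real" where
  "steiner_hm n E k i = real (steiner_dist {1..n} E (i ` {..<k}))"

definition identity_hm :: "nat \<Rightarrow> (nat \<Rightarrow> 'a) \<Rightarrow> real" where
  "identity_hm k i = (if \<forall>j<k. i j = i 0 then 1 else 0)"

end

theory Submission
  imports Defs
begin


lemma adj_sym: "(v,w) \<in> adj_rel F \<longleftrightarrow> (w,v) \<in> adj_rel F"
  by (auto simp: adj_rel_def insert_commute)

lemma proj_lemma:
  assumes FE: "F \<subseteq> E" and f: "f = {p,q}" and pS: "p \<in> S" and qS: "q \<notin> S"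
    and clos: "\<And>v w. {v,w} \<in> E - {f} \<Longrightarrow> v \<in> S \<longleftrightarrow> w \<in> S"
    and ab: "(a,b) \<in> (adj_rel F)\<^sup>*"
  shows "((if a \<in> S then a else p), (if b \<in> S then b else p)) \<in> (adj_rel {g\<in>F. g \<subseteq> S})\<^sup>*"
  using ab
proof (induction rule: rtrancl_induct)
  case base
  then show ?case by simp
next
  case (step b c)
  have bc: "{b,c} \<in> F" using step(2) by (simp add: adj_rel_def)
  show ?case
  proof (cases "b \<in> S \<and> c \<in> S")
    case True
    then have "(b,c) \<in> adj_rel {g\<in>F. g \<subseteq> S}" using bc by (simp add: adj_rel_def)
    then show ?thesis using step(3) True by (simp add: rtrancl_into_rtrancl)
  next
    case False
    show ?thesis
    proof (cases "b \<notin> S \<and> c \<notin> S")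
      case True then show ?thesis using step(3) by simp
    next
      case False2: False
      have "{b,c} \<notin> E - {f}" using clos False False2 by blast
      then have "{b,c} = {p,q}" using bc FE f by blast
      then have "(if b \<in> S then b else p) = p" "(if c \<in> S then c else p) = p"
        using pS qS by (auto simp: doubleton_eq_iff)
      then show ?thesis using step(3) by simp
    qed
  qed
qed

lemma shrink:
  assumes FE: "F \<subseteq> E" and finF: "finite F" and fF: "f \<in> F" and f: "f = {p,q}"
    and pS: "p \<in> S" and qS: "q \<notin> S"
    and clos: "\<And>v w. {v,w} \<in> E - {f} \<Longrightarrow> v \<in> S \<longleftrightarrow> w \<in> S"
    and UW: "U \<subseteq> W" and WV: "W \<subseteq> V" and FW: "\<forall>g\<in>F. g \<subseteq> W"
    and conn: "graph_connected W F" and US: "U \<subseteq> S"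
  shows "\<exists>W' F'. U \<subseteq> W' \<and> W' \<subseteq> V \<and> F' \<subseteq> E \<and> (\<forall>g\<in>F'. g \<subseteq> W')
           \<and> graph_connected W' F' \<and> card F' < card F"
proof (intro exI conjI)
  let ?W = "W \<inter> S" and ?F = "{g\<in>F. g \<subseteq> S}"
  show "U \<subseteq> ?W" using UW US by (rule Int_greatest)
  show "?W \<subseteq> V" using WV by auto
  show "?F \<subseteq> E" using FE by auto
  show "\<forall>g\<in>?F. g \<subseteq> ?W" using FW by auto
  show "graph_connected ?W ?F"
    unfolding graph_connected_def
  proof (intro ballI)
    fix a b assume a: "a \<in> ?W" and b: "b \<in> ?W"
    have "(a,b) \<in> (adj_rel F)\<^sup>*" using conn a b by (auto simp: graph_connected_def)
    from proj_lemma[OF FE f pS qS clos this] a b show "(a,b) \<in> (adj_rel ?F)\<^sup>*" by simp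
  qed
  have "q \<in> f" using f by simp
  then have "f \<notin> ?F" using qS by blast
  then have "?F \<subset> F" using fF by blast
  then show "card ?F < card F" using finF by (simp add: psubset_card_mono)
qed

lemma edge_facts:
  assumes T: "is_tree V E" and fE: "f \<in> E"
  shows "\<exists>y. f = {Min f, y} \<and> Min f \<noteq> y \<and> Min f \<in> V \<and> y \<in> V
            \<and> (Min f, y) \<notin> (adj_rel (E-{f}))\<^sup>*"
proof -
  have "f \<subseteq> V" "card f = 2" using T fE by (auto simp: is_tree_def simple_graph_def)
  then obtain a b where ab: "f = {a,b}" "a \<noteq> b" by (auto simp: card_2_iff)
  define x where "x = min a b"
  define y where "y = max a b"
  have fxy: "f = {x,y}" "x \<noteq> y" using ab by (auto simp: x_def y_def min_def max_def)
  have "Min f = x" using ab by (auto simp: x_def min_def)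
  moreover have "(x,y) \<notin> (adj_rel (E-{f}))\<^sup>*"
  proof -
    have "\<forall>e\<in>E. \<forall>x y. e = {x, y} \<longrightarrow> (x, y) \<notin> (adj_rel (E - {e}))\<^sup>*"
      using T unfolding is_tree_def by blast
    then have "\<forall>x' y'. f = {x', y'} \<longrightarrow> (x', y') \<notin> (adj_rel (E - {f}))\<^sup>*" using fE by blast
    then show ?thesis using fxy(1) by blast
  qed
  ultimately show ?thesis using fxy \<open>f \<subseteq> V\<close> by auto
qed

definition sep :: "nat set \<Rightarrow> nat set set \<Rightarrow> nat set \<Rightarrow> nat set \<Rightarrow> bool" where
  "sep V E e U \<longleftrightarrow> \<not> U \<subseteq> side_A V E e \<and> \<not> U \<subseteq> V - side_A V E e"

lemma steiner_eq:
  assumes T: "is_tree V E" and UV: "U \<subseteq> V"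
  shows "steiner_dist V E U = card {e\<in>E. sep V E e U}"
proof -
  have finV: "finite V" using T by (simp add: is_tree_def)
  have EV: "E \<subseteq> Pow V" using T by (auto simp: is_tree_def simple_graph_def)
  have finE: "finite E" using EV finV by (meson finite_Pow_iff finite_subset)
  define P where "P m = (\<exists>W F. U \<subseteq> W \<and> W \<subseteq> V \<and> F \<subseteq> E \<and>
       (\<forall>f\<in>F. f \<subseteq> W) \<and> graph_connected W F \<and> card F = m)" for m
  have sd: "steiner_dist V E U = (LEAST m. P m)" by (simp add: steiner_dist_def P_def)
  have "P (card E)" unfolding P_def
    by (rule exI[of _ V], rule exI[of _ E]) (use UV EV T in \<open>auto simp: is_tree_def\<close>)
  then have "P (LEAST m. P m)" by (rule LeastI)
  then obtain W F where W: "U \<subseteq> W" "W \<subseteq> V" "F \<subseteq> E" "\<forall>f\<in>F. f \<subseteq> W" "graph_connected W F"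
     and cF: "card F = (LEAST m. P m)" unfolding P_def by blast
  have finF: "finite F" using W(3) finE finite_subset by blast
  have lower: "{e\<in>E. sep V E e U} \<subseteq> F"
  proof
    fix e assume "e \<in> {e\<in>E. sep V E e U}"
    then have eE: "e \<in> E" and s: "sep V E e U" by auto
    from s obtain u w where u: "u \<in> U" "u \<in> side_A V E e" and w: "w \<in> U" "w \<notin> side_A V E e"
      unfolding sep_def using UV by blast
    show "e \<in> F"
    proof (rule ccontr)
      assume "e \<notin> F"
      then have "F \<subseteq> E - {e}" using W(3) by blast
      then have "adj_rel F \<subseteq> adj_rel (E - {e})" by (auto simp: adj_rel_def)
      moreover have "(u,w) \<in> (adj_rel F)\<^sup>*" using W(1,5) u(1) w(1) unfolding graph_connected_def by blast
      ultimately have "(u,w) \<in> (adj_rel (E - {e}))\<^sup>*" using rtrancl_mono by blast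
      moreover have "(Min e, u) \<in> (adj_rel (E - {e}))\<^sup>*" using u by (simp add: side_A_def)
      ultimately have "(Min e, w) \<in> (adj_rel (E - {e}))\<^sup>*" by simp
      then show False using w UV by (auto simp: side_A_def)
    qed
  qed
  have upper: "F \<subseteq> {e\<in>E. sep V E e U}"
  proof
    fix f assume fF: "f \<in> F"
    have fE: "f \<in> E" using fF W(3) by blast
    show "f \<in> {e\<in>E. sep V E e U}"
    proof (rule ccontr)
      assume ns: "f \<notin> {e\<in>E. sep V E e U}"
      obtain y where y: "f = {Min f, y}" "Min f \<noteq> y" "Min f \<in> V" "y \<in> V"
        "(Min f, y) \<notin> (adj_rel (E-{f}))\<^sup>*" using edge_facts[OF T fE] by (elim exE conjE)
      let ?A = "side_A V E f"
      have xA: "Min f \<in> ?A" using y by (simp add: side_A_def)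
      have yA: "y \<notin> ?A" using y by (simp add: side_A_def)
      have closA: "v \<in> ?A \<longleftrightarrow> w \<in> ?A" if "{v,w} \<in> E - {f}" for v w
      proof -
        have vw: "v \<in> V" "w \<in> V" using that EV by auto
        have "(v,w) \<in> adj_rel (E-{f})" "(w,v) \<in> adj_rel (E-{f})" using that
          by (auto simp: adj_rel_def insert_commute)
        note R = this
        show ?thesis
        proof
          assume "v \<in> ?A"
          then have "(Min f, v) \<in> (adj_rel (E-{f}))\<^sup>*" by (simp add: side_A_def)
          then have "(Min f, w) \<in> (adj_rel (E-{f}))\<^sup>*" using R(1) by (rule rtrancl_into_rtrancl)
          then show "w \<in> ?A" using vw by (simp add: side_A_def)
        next
          assume "w \<in> ?A"
          then have "(Min f, w) \<in> (adj_rel (E-{f}))\<^sup>*" by (simp add: side_A_def)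
          then have "(Min f, v) \<in> (adj_rel (E-{f}))\<^sup>*" using R(2) by (rule rtrancl_into_rtrancl)
          then show "v \<in> ?A" using vw by (simp add: side_A_def)
        qed
      qed
      have closB: "v \<in> V - ?A \<longleftrightarrow> w \<in> V - ?A" if "{v,w} \<in> E - {f}" for v w
      proof -
        have "v \<in> V" "w \<in> V" using that EV by auto
        then show ?thesis using closA[OF that] by simp
      qed
      have "\<exists>W' F'. U \<subseteq> W' \<and> W' \<subseteq> V \<and> F' \<subseteq> E \<and> (\<forall>g\<in>F'. g \<subseteq> W')
           \<and> graph_connected W' F' \<and> card F' < card F"
      proof (cases "U \<subseteq> ?A")
        case True
        show ?thesis by (rule shrink[OF W(3) finF fF y(1) xA yA closA W(1,2,4,5) True])
      next
        case False
        have "\<not> sep V E f U" using ns fE by simp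
        then have UB: "U \<subseteq> V - ?A" using False unfolding sep_def by simp
        have f2: "f = {y, Min f}" using y(1) by (simp add: insert_commute)
        have yB: "y \<in> V - ?A" using y(4) yA by simp
        have xB: "Min f \<notin> V - ?A" using xA by simp
        show ?thesis by (rule shrink[OF W(3) finF fF f2 yB xB closB W(1,2,4,5) UB])
      qed
      then obtain W' F' where h: "U \<subseteq> W' \<and> W' \<subseteq> V \<and> F' \<subseteq> E \<and> (\<forall>g\<in>F'. g \<subseteq> W')
           \<and> graph_connected W' F'" and lt: "card F' < card F" by blast
      have "P (card F')" unfolding P_def using h by blast
      moreover have "\<not> P (card F')" using not_less_Least[of "card F'" P] lt cF by simp
      ultimately show False by simp
    qed
  qed
  from lower upper have "F = {e\<in>E. sep V E e U}" by blast
  then show ?thesis using sd cF by simp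
qed



definition chi :: "'a set \<Rightarrow> 'a \<Rightarrow> real" where
  "chi S v = (if v \<in> S then 1 else 0)"

lemma prod_zero_lt:
  fixes g :: "nat \<Rightarrow> real"
  assumes "j < k" "g j = 0" shows "(\<Prod>j<k. g j) = 0"
  using assms by (metis finite_lessThan lessThan_iff prod_zero_iff)

lemma ind_prod:
  fixes i :: "nat \<Rightarrow> nat"
  shows "(if i ` {..<k} \<subseteq> S then 1 else 0) = (\<Prod>j<k. chi S (i j))"
proof (cases "i ` {..<k} \<subseteq> S")
  case True
  then have "(\<Prod>j<k. chi S (i j)) = (\<Prod>j<k. 1)" by (intro prod.cong) (auto simp: chi_def)
  then show ?thesis using True by simp
next
  case False
  then obtain j where j: "j < k" "i j \<notin> S" by auto
  then have "chi S (i j) = 0" by (simp add: chi_def)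
  then have "(\<Prod>j<k. chi S (i j)) = 0" using j(1) prod_zero_lt[of j k "\<lambda>j. chi S (i j)"] by simp
  then show ?thesis using False by simp
qed

lemma card_sep_sum:
  assumes "U \<noteq> {}" "finite E"
  shows "real (card {e\<in>E. sep V E e U}) = (\<Sum>e\<in>E. 1 - (if U \<subseteq> side_A V E e then 1 else 0)
           - (if U \<subseteq> V - side_A V E e then 1 else 0))"
proof -
  have "real (card {e\<in>E. sep V E e U}) = (\<Sum>e\<in>{e\<in>E. sep V E e U}. 1)" by simp
  also have "\<dots> = (\<Sum>e\<in>E. if sep V E e U then 1 else 0)" using assms(2) by (rule sum.inter_filter)
  also have "\<dots> = (\<Sum>e\<in>E. 1 - (if U \<subseteq> side_A V E e then 1 else 0)
           - (if U \<subseteq> V - side_A V E e then 1 else 0))"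
  proof (intro sum.cong refl)
    fix e
    have "\<not> (U \<subseteq> side_A V E e \<and> U \<subseteq> V - side_A V E e)" using assms(1) by blast
    then show "(if sep V E e U then 1 else 0) = (1::real) - (if U \<subseteq> side_A V E e then 1 else 0)
           - (if U \<subseteq> V - side_A V E e then 1 else 0)"
      unfolding sep_def by (cases "U \<subseteq> side_A V E e"; cases "U \<subseteq> V - side_A V E e") simp_all
  qed
  finally show ?thesis .
qed

lemma finite_edges: assumes T: "is_tree V E" shows "finite E"
proof -
  have "E \<subseteq> Pow V" using T by (auto simp: is_tree_def simple_graph_def)
  moreover have "finite (Pow V)" using T by (simp add: is_tree_def)
  ultimately show ?thesis by (rule finite_subset)
qed

lemma steiner_hm_expand:
  assumes T: "is_tree {1..n} E" and k: "k > 0" and i: "i \<in> Pi\<^sub>E {..<k} (\<lambda>_. {1..n})"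
  shows "steiner_hm n E k i = (\<Sum>e\<in>E. 1 - (\<Prod>j<k. chi (side_A {1..n} E e) (i j))
            - (\<Prod>j<k. chi ({1..n} - side_A {1..n} E e) (i j)))"
proof -
  have finE: "finite E" using T by (rule finite_edges)
  have UV: "i ` {..<k} \<subseteq> {1..n}" using i by auto
  have Une: "i ` {..<k} \<noteq> {}" using k by auto
  show ?thesis
    unfolding steiner_hm_def steiner_eq[OF T UV] card_sep_sum[OF Une finE] ind_prod ..
qed

lemma sum_prod_ind:
  fixes f :: "nat \<Rightarrow> 'a \<Rightarrow> real"
  assumes "finite V"
  shows "(\<Sum>i\<in>Pi\<^sub>E {..<k} (\<lambda>_. V). \<Prod>j<k. f j (i j)) = (\<Prod>j<k. \<Sum>v\<in>V. f j v)"
  using prod_sum_PiE[of "{..<k}" "\<lambda>_. V" f] assms by simp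

lemma identity_expand:
  assumes k: "k > 0" and i: "i \<in> Pi\<^sub>E {..<k} (\<lambda>_. E)" and finE: "finite E"
  shows "identity_hm k i = (\<Sum>e\<in>E. \<Prod>j<k. chi {e} (i j))"
proof (cases "\<forall>j<k. i j = i 0")
  case True
  have i0: "i 0 \<in> E" using i k by auto
  have "(\<Sum>e\<in>E. \<Prod>j<k. chi {e} (i j)) = (\<Sum>e\<in>E. if e = i 0 then 1 else 0)"
  proof (intro sum.cong refl)
    fix e assume "e \<in> E"
    show "(\<Prod>j<k. chi {e} (i j)) = (if e = i 0 then 1 else 0)"
    proof (cases "e = i 0")
      case True2: True
      have "(\<Prod>j<k. chi {e} (i j)) = (\<Prod>j<k. 1)"
      proof (intro prod.cong refl)
        fix j assume "j \<in> {..<k}"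
        then have "i j = i 0" using True by blast
        then show "chi {e} (i j) = 1" using True2 by (simp add: chi_def)
      qed
      then show ?thesis using True2 by simp
    next
      case False
      then have "chi {e} (i 0) = 0" by (simp add: chi_def)
      then have "(\<Prod>j<k. chi {e} (i j)) = 0" using k prod_zero_lt[of 0 k "\<lambda>j. chi {e} (i j)"] by simp
      then show ?thesis using False by simp
    qed
  qed
  also have "\<dots> = 1" using i0 finE by simp
  moreover have "identity_hm k i = 1" unfolding identity_hm_def using True by (rule if_P)
  ultimately show ?thesis by simp
next
  case False
  then obtain j where j: "j < k" "i j \<noteq> i 0" by auto
  have z: "(\<Prod>j<k. chi {e} (i j)) = 0" for e
  proof (cases "e = i 0")
    case True
    then have "chi {e} (i j) = 0" using j by (simp add: chi_def)
    then show ?thesis using j(1) prod_zero_lt[of j k "\<lambda>j. chi {e} (i j)"] by simp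
  next
    case False
    then have "chi {e} (i 0) = 0" by (simp add: chi_def)
    then show ?thesis using k prod_zero_lt[of 0 k "\<lambda>j. chi {e} (i j)"] by simp
  qed
  have "identity_hm k i = 0" unfolding identity_hm_def using False by (rule if_not_P)
  then show ?thesis by (simp only: z sum.neutral_const)
qed



theorem mainTheorem6:
  fixes n k :: nat and E :: "nat set set" and c :: "nat \<Rightarrow> nat \<Rightarrow> real"
  assumes "n \<ge> 2" and "is_tree {1..n} E"
    and "k \<ge> 2" and "even k"
    and "\<And>j. j < k \<Longrightarrow> (\<Sum>v\<in>{1..n}. c j v) = 0"
  shows "hm_form {1..n} k (steiner_hm n E k) c
           = hm_form E k (\<lambda>i. -2 * identity_hm k i) (\<lambda>j. P_T n E (c j))
       \<and> hm_form E k (\<lambda>i. -2 * identity_hm k i) (\<lambda>j. P_T n E (c j))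
           = -2 * (\<Sum>e\<in>E. \<Prod>j<k. (\<Sum>v\<in>{1..n}. a_prime n E e v * c j v))"
proof -
  define V where "V = {1..n::nat}"
  have T: "is_tree V E" using assms(2) by (simp add: V_def)
  have k0: "k > 0" using assms(3) by simp
  have finV: "finite V" by (simp add: V_def)
  have finE: "finite E" using T by (rule finite_edges)
  have c0: "(\<Sum>v\<in>V. c j v) = 0" if "j < k" for j using assms(5)[OF that] by (simp add: V_def)
  define A where "A e = side_A V E e" for e
  have AV: "A e \<subseteq> V" for e by (auto simp: A_def side_A_def)
  define s where "s e j = (\<Sum>v\<in>V. chi (A e) v * c j v)" for e j
  have aprime: "(\<Sum>v\<in>V. a_prime n E e v * c j v) = s e j" if "j < k" for e j
  proof -
    have "(\<Sum>v\<in>V. a_prime n E e v * c j v)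
        = (\<Sum>v\<in>V. chi (A e) v * c j v - (real (card (A e)) / real n) * c j v)"
      by (intro sum.cong refl) (simp add: a_prime_def chi_def A_def V_def algebra_simps)
    also have "\<dots> = s e j - (real (card (A e)) / real n) * (\<Sum>v\<in>V. c j v)"
      by (simp add: s_def sum_subtractf sum_distrib_left)
    also have "\<dots> = s e j" using c0[OF that] by simp
    finally show ?thesis .
  qed
  have sB: "(\<Sum>v\<in>V. chi (V - A e) v * c j v) = - s e j" if "j < k" for e j
  proof -
    have "(\<Sum>v\<in>V. chi (V - A e) v * c j v) = (\<Sum>v\<in>V. c j v - chi (A e) v * c j v)"
      by (intro sum.cong refl) (simp add: chi_def)
    also have "\<dots> = - s e j" using c0[OF that] by (simp add: s_def sum_subtractf)
    finally show ?thesis .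
  qed
  have prodB: "(\<Prod>j<k. \<Sum>v\<in>V. chi (V - A e) v * c j v) = (\<Prod>j<k. s e j)" for e
  proof -
    have "(\<Prod>j<k. \<Sum>v\<in>V. chi (V - A e) v * c j v) = (\<Prod>j<k. - s e j)"
      by (intro prod.cong refl) (simp add: sB)
    also have "\<dots> = (-1) ^ k * (\<Prod>j<k. s e j)" by (simp add: prod_uminus)
    also have "\<dots> = (\<Prod>j<k. s e j)" using assms(4) by simp
    finally show ?thesis .
  qed
  have prod0: "(\<Prod>j<k. \<Sum>v\<in>V. c j v) = 0"
    using prod_zero_lt[of 0 k "\<lambda>j. \<Sum>v\<in>V. c j v"] k0 c0[OF k0] by simp
  let ?PI = "Pi\<^sub>E {..<k} (\<lambda>_. V)"
  have L: "hm_form {1..n} k (steiner_hm n E k) c = (\<Sum>e\<in>E. -2 * (\<Prod>j<k. s e j))"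
  proof -
    have "hm_form {1..n} k (steiner_hm n E k) c
        = (\<Sum>i\<in>?PI. \<Sum>e\<in>E. (\<Prod>j<k. c j (i j)) - (\<Prod>j<k. chi (A e) (i j) * c j (i j))
             - (\<Prod>j<k. chi (V - A e) (i j) * c j (i j)))"
      unfolding hm_form_def V_def[symmetric]
    proof (intro sum.cong refl)
      fix i assume i: "i \<in> ?PI"
      have eq: "steiner_hm n E k i = (\<Sum>e\<in>E. 1 - (\<Prod>j<k. chi (A e) (i j))
            - (\<Prod>j<k. chi (V - A e) (i j)))"
        using steiner_hm_expand[OF assms(2) k0] i by (simp add: V_def A_def)
      show "steiner_hm n E k i * (\<Prod>j<k. c j (i j)) = (\<Sum>e\<in>E. (\<Prod>j<k. c j (i j))
             - (\<Prod>j<k. chi (A e) (i j) * c j (i j))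
             - (\<Prod>j<k. chi (V - A e) (i j) * c j (i j)))"
        unfolding eq sum_distrib_right
        by (intro sum.cong refl) (simp add: prod.distrib algebra_simps)
    qed
    also have "\<dots> = (\<Sum>e\<in>E. \<Sum>i\<in>?PI. (\<Prod>j<k. c j (i j)) - (\<Prod>j<k. chi (A e) (i j) * c j (i j))
             - (\<Prod>j<k. chi (V - A e) (i j) * c j (i j)))"
      by (rule sum.swap)
    also have "\<dots> = (\<Sum>e\<in>E. (\<Prod>j<k. \<Sum>v\<in>V. c j v) - (\<Prod>j<k. \<Sum>v\<in>V. chi (A e) v * c j v)
             - (\<Prod>j<k. \<Sum>v\<in>V. chi (V - A e) v * c j v))"
    proof (intro sum.cong refl)
      fix e
      show "(\<Sum>i\<in>?PI. (\<Prod>j<k. c j (i j)) - (\<Prod>j<k. chi (A e) (i j) * c j (i j))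
             - (\<Prod>j<k. chi (V - A e) (i j) * c j (i j))) = (\<Prod>j<k. \<Sum>v\<in>V. c j v) - (\<Prod>j<k. \<Sum>v\<in>V. chi (A e) v * c j v)
             - (\<Prod>j<k. \<Sum>v\<in>V. chi (V - A e) v * c j v)"
        using sum_prod_ind[OF finV, where f="\<lambda>j v. chi (A e) v * c j v" and k=k]
          sum_prod_ind[OF finV, where f="\<lambda>j v. chi (V - A e) v * c j v" and k=k]
          sum_prod_ind[OF finV, where f=c and k=k]
        by (simp add: sum_subtractf)
    qed
    also have "\<dots> = (\<Sum>e\<in>E. -2 * (\<Prod>j<k. s e j))"
      by (simp add: prod0 prodB s_def)
    finally show ?thesis .
  qed
  have R: "hm_form E k (\<lambda>i. -2 * identity_hm k i) (\<lambda>j. P_T n E (c j))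
        = -2 * (\<Sum>e\<in>E. \<Prod>j<k. P_T n E (c j) e)"
  proof -
    let ?EI = "Pi\<^sub>E {..<k} (\<lambda>_. E)"
    have "hm_form E k (\<lambda>i. -2 * identity_hm k i) (\<lambda>j. P_T n E (c j))
        = (\<Sum>i\<in>?EI. -2 * (\<Sum>e\<in>E. \<Prod>j<k. chi {e} (i j) * P_T n E (c j) (i j)))"
      unfolding hm_form_def
    proof (intro sum.cong refl)
      fix i assume i: "i \<in> ?EI"
      show "-2 * identity_hm k i * (\<Prod>j<k. P_T n E (c j) (i j))
          = -2 * (\<Sum>e\<in>E. \<Prod>j<k. chi {e} (i j) * P_T n E (c j) (i j))"
        using identity_expand[OF k0 i finE] by (simp add: sum_distrib_right prod.distrib)
    qed
    also have "\<dots> = -2 * (\<Sum>e\<in>E. \<Sum>i\<in>?EI. \<Prod>j<k. chi {e} (i j) * P_T n E (c j) (i j))"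
      by (simp add: sum_distrib_left sum.swap[of _ ?EI E])
    also have "\<dots> = -2 * (\<Sum>e\<in>E. \<Prod>j<k. \<Sum>x\<in>E. chi {e} x * P_T n E (c j) x)"
    proof -
      have "(\<Sum>i\<in>?EI. \<Prod>j<k. chi {e} (i j) * P_T n E (c j) (i j))
          = (\<Prod>j<k. \<Sum>x\<in>E. chi {e} x * P_T n E (c j) x)" for e
        using sum_prod_ind[OF finE, where f="\<lambda>j x. chi {e} x * P_T n E (c j) x" and k=k] by simp
      then show ?thesis by simp
    qed
    also have "\<dots> = -2 * (\<Sum>e\<in>E. \<Prod>j<k. P_T n E (c j) e)"
    proof -
      have "(\<Sum>x\<in>E. chi {e} x * P_T n E (c j) x) = P_T n E (c j) e" if "e \<in> E" for e j
      proof -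
        have "(\<Sum>x\<in>E. chi {e} x * P_T n E (c j) x) = (\<Sum>x\<in>E. if x = e then P_T n E (c j) x else 0)"
          by (intro sum.cong refl) (simp add: chi_def)
        also have "\<dots> = P_T n E (c j) e" using that finE by (simp add: sum.delta')
        finally show ?thesis .
      qed
      then show ?thesis by simp
    qed
    finally show ?thesis .
  qed
  have aprime2: "(\<Sum>v\<in>{1..n}. a_prime n E e v * c j v) = s e j" if "j < k" for e j
    using aprime[OF that] unfolding V_def .
  have PT: "(\<Prod>j<k. P_T n E (c j) e) = (\<Prod>j<k. s e j)" for e
  proof (intro prod.cong refl)
    fix j assume "j \<in> {..<k}"
    then have "j < k" by simp
    then show "P_T n E (c j) e = s e j" unfolding P_T_def by (rule aprime2)
  qed
  have AP: "(\<Prod>j<k. \<Sum>v\<in>{1..n}. a_prime n E e v * c j v) = (\<Prod>j<k. s e j)" for e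
  proof (intro prod.cong refl)
    fix j assume "j \<in> {..<k}"
    then have "j < k" by simp
    then show "(\<Sum>v\<in>{1..n}. a_prime n E e v * c j v) = s e j" by (rule aprime2)
  qed
  show ?thesis
    unfolding L R PT AP sum_distrib_left by simp
qed


end
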